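(* Let $n\neq 1$ be a real number, $k_n=n-1$, and $k_0\in\mathbb{R}$. On the phase space with canonical coordinates $(r,\phi,p_r,p_\phi)$, $r>0$, consider $$H_{nc}=\tfrac12 r^{2n}\Big(p_r^2+\tfrac{p_\phi^2}{r^2}\Big)+k_0r^{n-1}.$$ With $P_1=r^n\big(p_r\cos(k_n\phi)+\tfrac1r p_\phi\sin(k_n\phi)\big)$ and $P_2=r^n\big(p_r\sin(k_n\phi)-\tfrac1r p_\phi\cos(k_n\phi)\big)$, the functions $$J_1=p_\phi,\qquad J_2=P_2p_\phi-k_0\cos(k_n\phi),\qquad J_3=P_1p_\phi+k_0\sin(k_n\phi)$$ are constants of motion of $H_{nc}$, i.e. they Poisson commute with $H_{nc}$; hence $H_{nc}$ is superintegrable.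
   Context: The Poisson bracket is the canonical one in $(r,\phi,p_r,p_\phi)$. A constant of motion of $H$ is a function $F$ with $\{F,H\}=0$. *)

theory Defs
  imports "HOL-Analysis.Analysis"
begin

text \<open>Phase-space functions in canonical coordinates (r, phi, p_r, p_phi), curried.\<close>
type_synonym phasefun = "real \<Rightarrow> real \<Rightarrow> real \<Rightarrow> real \<Rightarrow> real"

definition poisson :: "phasefun \<Rightarrow> phasefun \<Rightarrow> phasefun" where
  "poisson F G r ph pr pph =
     deriv (\<lambda>x. F x ph pr pph) r * deriv (\<lambda>x. G r ph x pph) pr
   - deriv (\<lambda>x. F r ph x pph) pr * deriv (\<lambda>x. G x ph pr pph) r
   + deriv (\<lambda>x. F r x pr pph) ph * deriv (\<lambda>x. G r ph pr x) pph
   - deriv (\<lambda>x. F r ph pr x) pph * deriv (\<lambda>x. G r x pr pph) ph"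

definition Hnc :: "real \<Rightarrow> real \<Rightarrow> phasefun" where
  "Hnc n k0 r ph pr pph =
     (1/2) * r powr (2*n) * (pr\<^sup>2 + pph\<^sup>2 / r\<^sup>2) + k0 * r powr (n - 1)"

definition P1 :: "real \<Rightarrow> phasefun" where
  "P1 n r ph pr pph = r powr n * (pr * cos ((n - 1) * ph) + (1/r) * pph * sin ((n - 1) * ph))"

definition P2 :: "real \<Rightarrow> phasefun" where
  "P2 n r ph pr pph = r powr n * (pr * sin ((n - 1) * ph) - (1/r) * pph * cos ((n - 1) * ph))"

definition J1 :: phasefun where
  "J1 r ph pr pph = pph"

definition J2 :: "real \<Rightarrow> real \<Rightarrow> phasefun" where
  "J2 n k0 r ph pr pph = P2 n r ph pr pph * pph - k0 * cos ((n - 1) * ph)"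

definition J3 :: "real \<Rightarrow> real \<Rightarrow> phasefun" where
  "J3 n k0 r ph pr pph = P1 n r ph pr pph * pph + k0 * sin ((n - 1) * ph)"

end

theory Submission imports Defs begin

lemma dHr: "r > 0 \<Longrightarrow> deriv (\<lambda>x. Hnc n k0 x ph pr pph) r =
  n * r powr (2*n-1) * (pr\<^sup>2 + pph\<^sup>2 / r\<^sup>2) - r powr (2*n) * pph\<^sup>2 / r^3 + k0*(n-1)* r powr (n-2)"
  unfolding Hnc_def apply (rule DERIV_imp_deriv) apply (rule derivative_eq_intros refl | simp)+ apply (simp_all add: field_simps power2_eq_square power3_eq_cube eval_nat_numeral)? done
lemma dHpr: "deriv (\<lambda>x. Hnc n k0 r ph x pph) pr = r powr (2*n) * pr"
  unfolding Hnc_def apply (rule DERIV_imp_deriv) apply (rule derivative_eq_intros refl | simp)+ apply (simp_all add: field_simps power2_eq_square power3_eq_cube eval_nat_numeral)? done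
lemma dHph: "deriv (\<lambda>x. Hnc n k0 r x pr pph) ph = 0"
  unfolding Hnc_def by simp
lemma dHpp: "r > 0 \<Longrightarrow> deriv (\<lambda>x. Hnc n k0 r ph pr x) pph = r powr (2*n) * pph / r^2"
  unfolding Hnc_def apply (rule DERIV_imp_deriv) apply (rule derivative_eq_intros refl | simp)+ apply (simp_all add: field_simps power2_eq_square power3_eq_cube eval_nat_numeral)? done

lemma dJ2r: "r > 0 \<Longrightarrow> deriv (\<lambda>x. J2 n k0 x ph pr pph) r =
  pph * (n * r powr (n-1) * (pr * sin ((n - 1) * ph) - pph * cos ((n - 1) * ph) / r) + r powr n * pph * cos ((n - 1) * ph) / r^2)"
  unfolding J2_def P2_def apply (rule DERIV_imp_deriv) apply (rule derivative_eq_intros refl | simp)+ apply (simp_all add: field_simps power2_eq_square power3_eq_cube eval_nat_numeral)? done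
lemma dJ2pr: "deriv (\<lambda>x. J2 n k0 r ph x pph) pr = r powr n * sin ((n - 1) * ph) * pph"
  unfolding J2_def P2_def apply (rule DERIV_imp_deriv) apply (rule derivative_eq_intros refl | simp)+ apply (simp_all add: field_simps power2_eq_square power3_eq_cube eval_nat_numeral)? done
lemma dJ2ph: "deriv (\<lambda>x. J2 n k0 r x pr pph) ph = pph * r powr n * (n-1) * (pr * cos ((n - 1) * ph) + pph * sin ((n - 1) * ph) / r) + k0 * (n-1) * sin ((n - 1) * ph)"
  unfolding J2_def P2_def apply (rule DERIV_imp_deriv) apply (rule derivative_eq_intros refl | simp)+ apply (simp_all add: field_simps power2_eq_square power3_eq_cube eval_nat_numeral)? done
lemma dJ2pp: "deriv (\<lambda>x. J2 n k0 r ph pr x) pph = r powr n * pr * sin ((n - 1) * ph) - 2 * r powr n * pph * cos ((n - 1) * ph) / r"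
  unfolding J2_def P2_def apply (rule DERIV_imp_deriv) apply (rule derivative_eq_intros refl | simp)+ apply (simp_all add: field_simps power2_eq_square power3_eq_cube eval_nat_numeral)? done

lemma dJ3r: "r > 0 \<Longrightarrow> deriv (\<lambda>x. J3 n k0 x ph pr pph) r =
  pph * (n * r powr (n-1) * (pr * cos ((n - 1) * ph) + pph * sin ((n - 1) * ph) / r) - r powr n * pph * sin ((n - 1) * ph) / r^2)"
  unfolding J3_def P1_def apply (rule DERIV_imp_deriv) apply (rule derivative_eq_intros refl | simp)+ apply (simp_all add: field_simps power2_eq_square power3_eq_cube eval_nat_numeral)? done
lemma dJ3pr: "deriv (\<lambda>x. J3 n k0 r ph x pph) pr = r powr n * cos ((n - 1) * ph) * pph"
  unfolding J3_def P1_def apply (rule DERIV_imp_deriv) apply (rule derivative_eq_intros refl | simp)+ apply (simp_all add: field_simps power2_eq_square power3_eq_cube eval_nat_numeral)? done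
lemma dJ3ph: "deriv (\<lambda>x. J3 n k0 r x pr pph) ph = pph * r powr n * (n-1) * (- pr * sin ((n - 1) * ph) + pph * cos ((n - 1) * ph) / r) + k0 * (n-1) * cos ((n - 1) * ph)"
  unfolding J3_def P1_def apply (rule DERIV_imp_deriv) apply (rule derivative_eq_intros refl | simp)+ apply (simp_all add: field_simps power2_eq_square power3_eq_cube eval_nat_numeral)? done
lemma dJ3pp: "deriv (\<lambda>x. J3 n k0 r ph pr x) pph = r powr n * pr * cos ((n - 1) * ph) + 2 * r powr n * pph * sin ((n - 1) * ph) / r"
  unfolding J3_def P1_def apply (rule DERIV_imp_deriv) apply (rule derivative_eq_intros refl | simp)+ apply (simp_all add: field_simps power2_eq_square power3_eq_cube eval_nat_numeral)? done

lemma pw: fixes r n :: real assumes "r > 0" shows "r powr (2*n) = (r powr n)^2" "r powr (2*n-1) = (r powr n)^2 / r"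
  "r powr (n-1) = r powr n / r" "r powr (n-2) = r powr n / r^2"
proof -
  show 1: "r powr (2*n) = (r powr n)^2" by (metis mult_2 powr_add power2_eq_square)
  show "r powr (2*n-1) = (r powr n)^2 / r" using assms 1 by (simp add: powr_diff)
  show "r powr (n-1) = r powr n / r" using assms by (simp add: powr_diff)
  show "r powr (n-2) = r powr n / r^2" using assms by (simp add: powr_diff powr_realpow)
qed

theorem mainTheorem6:
  fixes n k0 :: real
  assumes "n \<noteq> 1"
  shows "\<forall>r ph pr pph. r > 0 \<longrightarrow>
           poisson J1 (Hnc n k0) r ph pr pph = 0 \<and>
           poisson (J2 n k0) (Hnc n k0) r ph pr pph = 0 \<and>
           poisson (J3 n k0) (Hnc n k0) r ph pr pph = 0"
proof (intro allI impI)
  fix r ph pr pph :: real assume r: "r > 0"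
  define a where "a = r powr n"
  define c where "c = cos ((n - 1) * ph)"
  define s where "s = sin ((n - 1) * ph)"
  have rne: "r \<noteq> 0" using r by simp
  note pws = pw[OF r, folded a_def]
  show "poisson J1 (Hnc n k0) r ph pr pph = 0 \<and>
           poisson (J2 n k0) (Hnc n k0) r ph pr pph = 0 \<and>
           poisson (J3 n k0) (Hnc n k0) r ph pr pph = 0"
  proof (intro conjI)
    show "poisson J1 (Hnc n k0) r ph pr pph = 0"
      unfolding poisson_def J1_def by (simp add: dHph)
    show "poisson (J2 n k0) (Hnc n k0) r ph pr pph = 0"
      unfolding poisson_def dHr[OF r] dHpr dHph dHpp[OF r] dJ2r[OF r] dJ2pr dJ2ph dJ2pp
      unfolding pws a_def[symmetric] c_def[symmetric] s_def[symmetric]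
      using rne by (simp add: field_simps power2_eq_square power3_eq_cube eval_nat_numeral)
    show "poisson (J3 n k0) (Hnc n k0) r ph pr pph = 0"
      unfolding poisson_def dHr[OF r] dHpr dHph dHpp[OF r] dJ3r[OF r] dJ3pr dJ3ph dJ3pp
      unfolding pws a_def[symmetric] c_def[symmetric] s_def[symmetric]
      using rne by (simp add: field_simps power2_eq_square power3_eq_cube eval_nat_numeral)
  qed
qed

end
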